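(* Let $n\ge 4$ and let $D_n$ be the tree on vertex set $\{1,\ldots,n\}$ with edges $\{1,3\}$, $\{2,3\}$ and $\{i,i+1\}$ for $3\le i\le n-1$, with adjacency matrix $A$; let $W(D_n)=[e_n,Ae_n,\ldots,A^{n-1}e_n]$ and let $\hat W(D_n)$ be obtained from $W(D_n)$ by deleting the first row and the last column. Let $B$ be the $(n-1)\times(n-1)$ tridiagonal matrix with zero diagonal, $B_{1,2}=1$, $B_{2,1}=2$, and $B_{i,i+1}=B_{i+1,i}=1$ for $2\le i\le n-2$, all other entries $0$. Then $\hat W(D_n)=W(B)$, where $W(B)=[e_{n-1},Be_{n-1},\ldots,B^{n-2}e_{n-1}]$.
   Context: $e_m$ denotes the all-ones vector of length $m$. For an $m\times m$ matrix $M$, $W(M)=[e_m,Me_m,\ldots,M^{m-1}e_m]$. *)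

theory Defs
  imports "Jordan_Normal_Form.Matrix"
begin

(* Indices are 0-based: vertex k of the paper is index k-1 here. *)

definition ones_vec :: "nat \<Rightarrow> int vec" where
  "ones_vec m = vec m (\<lambda>_. 1)"

definition walk_matrix :: "int mat \<Rightarrow> int mat" where
  "walk_matrix M = (let m = dim_row M in
     mat m m (\<lambda>(i,j). ((M ^\<^sub>m j) *\<^sub>v ones_vec m) $ i))"

definition D_adj :: "nat \<Rightarrow> int mat" where
  "D_adj n = mat n n (\<lambda>(i,j).
     let a = i + 1; b = j + 1 in
     if {a,b} = {1,3} \<or> {a,b} = {2,3} \<or> (\<exists>k. 3 \<le> k \<and> k \<le> n - 1 \<and> {a,b} = {k, k+1})
     then 1 else 0)"

definition hat_W :: "int mat \<Rightarrow> int mat" where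
  "hat_W W = mat (dim_row W - 1) (dim_col W - 1) (\<lambda>(i,j). W $$ (i+1, j))"

definition B_mat :: "nat \<Rightarrow> int mat" where
  "B_mat n = mat (n-1) (n-1) (\<lambda>(i,j).
     let a = i + 1; b = j + 1 in
     if a = 1 \<and> b = 2 then 1
     else if a = 2 \<and> b = 1 then 2
     else if (2 \<le> a \<and> a \<le> n - 2 \<and> b = a + 1) \<or> (2 \<le> b \<and> b \<le> n - 2 \<and> a = b + 1) then 1
     else 0)"

end

theory Submission imports Defs begin

lemma D_adj_entry:
  assumes "i < n" "k < n"
  shows "D_adj n $$ (i,k) = (if (i\<le>1 \<and> k=2) \<or> (i=2 \<and> k\<le>1) \<or> (i\<ge>2 \<and> k=i+1) \<or> (k\<ge>2 \<and> i=k+1) then 1 else 0)"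
proof -
  have "({i+1,k+1} = {1,3} \<or> {i+1,k+1} = {2,3} \<or> (\<exists>m. 3 \<le> m \<and> m \<le> n - 1 \<and> {i+1,k+1} = {m, m+1}))
     = ((i\<le>1 \<and> k=2) \<or> (i=2 \<and> k\<le>1) \<or> (i\<ge>2 \<and> k=i+1) \<or> (k\<ge>2 \<and> i=k+1))"
    (is "?L = ?R")
  proof
    assume ?L then show ?R unfolding doubleton_eq_iff by auto
  next
    assume r: ?R
    show ?L
    proof (cases "(i\<ge>2 \<and> k=i+1)")
      case True then show ?thesis using assms by (intro disjI2 exI[of _ "i+1"]) auto
    next
      case f1: False
      show ?thesis
      proof (cases "(k\<ge>2 \<and> i=k+1)")
        case True then show ?thesis using assms by (intro disjI2 exI[of _ "k+1"]) auto
      next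
        case False then show ?thesis using f1 r unfolding doubleton_eq_iff by auto
      qed
    qed
  qed
  then show ?thesis using assms unfolding D_adj_def by (simp add: Let_def)
qed

lemma B_entry:
  assumes "i < n - 1" "k < n - 1"
  shows "B_mat n $$ (i,k) = (if i=0 \<and> k=1 then 1 else if i=1 \<and> k=0 then 2 else if (i\<ge>1 \<and> k=i+1) \<or> (k\<ge>1 \<and> i=k+1) then 1 else 0)"
  using assms unfolding B_mat_def
  by (auto simp: Let_def)

lemma D_dim[simp]: "dim_row (D_adj n) = n" "dim_col (D_adj n) = n"
  unfolding D_adj_def by auto

lemma B_dim[simp]: "dim_row (B_mat n) = n - 1" "dim_col (B_mat n) = n - 1"
  unfolding B_mat_def by auto

lemma D_mult: assumes "dim_vec x = n" "i < n"
  shows "(D_adj n *\<^sub>v x) $ i = (\<Sum>k=0..<n. (if (i\<le>1 \<and> k=2) \<or> (i=2 \<and> k\<le>1) \<or> (i\<ge>2 \<and> k=i+1) \<or> (k\<ge>2 \<and> i=k+1) then x$k else 0))"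
  using assms by (auto simp: D_adj_entry scalar_prod_def intro!: sum.cong)

lemma B_mult: assumes "dim_vec y = n - 1" "i < n - 1"
  shows "(B_mat n *\<^sub>v y) $ i = (\<Sum>k=0..<n-1. (if i=0 \<and> k=1 then y$k else if i=1 \<and> k=0 then 2 * y$k else if (i\<ge>1 \<and> k=i+1) \<or> (k\<ge>1 \<and> i=k+1) then y$k else 0))"
  using assms by (auto simp: B_entry scalar_prod_def intro!: sum.cong)

lemma D_row01: assumes "dim_vec x = n" "i \<le> 1" "n \<ge> 4"
  shows "(D_adj n *\<^sub>v x) $ i = x $ 2"
proof -
  have "(D_adj n *\<^sub>v x) $ i = (\<Sum>k=0..<n. (if k = 2 then x$k else 0))"
    apply (subst D_mult) apply (use assms in simp) apply (use assms in arith)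
    apply (rule sum.cong, rule refl) using assms by auto
  then show ?thesis using assms by simp
qed

lemma D_row2: assumes "dim_vec x = n" "n \<ge> 4"
  shows "(D_adj n *\<^sub>v x) $ 2 = x$0 + x$1 + x$3"
proof -
  have "(D_adj n *\<^sub>v x) $ 2 = (\<Sum>k=0..<n. (if k = 0 then x$k else 0) + (if k = 1 then x$k else 0) + (if k = 3 then x$k else 0))"
    apply (subst D_mult) apply (use assms in simp) apply (use assms in arith)
    apply (rule sum.cong, rule refl) using assms by auto
  then show ?thesis using assms by (simp add: sum.distrib)
qed

lemma D_row3: assumes "dim_vec x = n" "n \<ge> 4" "3 \<le> i" "i < n"
  shows "(D_adj n *\<^sub>v x) $ i = x$(i-1) + (if i+1 < n then x$(i+1) else 0)"
proof -
  have "(D_adj n *\<^sub>v x) $ i = (\<Sum>k=0..<n. (if k = i-1 then x$k else 0) + (if k = i+1 then x$k else 0))"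
    apply (subst D_mult) apply (use assms in simp) apply (use assms in arith)
    apply (rule sum.cong, rule refl) using assms by auto
  then show ?thesis using assms by (simp add: sum.distrib)
qed

lemma B_row0: assumes "dim_vec y = n - 1" "n \<ge> 4"
  shows "(B_mat n *\<^sub>v y) $ 0 = y $ 1"
proof -
  have "(B_mat n *\<^sub>v y) $ 0 = (\<Sum>k=0..<n-1. (if k = 1 then y$k else 0))"
    apply (subst B_mult) apply (use assms in simp) apply (use assms in arith)
    apply (rule sum.cong, rule refl) using assms by auto
  then show ?thesis using assms by simp
qed

lemma B_row1: assumes "dim_vec y = n - 1" "n \<ge> 4"
  shows "(B_mat n *\<^sub>v y) $ 1 = 2 * y $ 0 + y $ 2"
proof -
  have "(B_mat n *\<^sub>v y) $ 1 = (\<Sum>k=0..<n-1. (if k = 0 then 2 * y$k else 0) + (if k = 2 then y$k else 0))"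
    apply (subst B_mult) apply (use assms in simp) apply (use assms in arith)
    apply (rule sum.cong, rule refl) using assms by auto
  then show ?thesis using assms by (simp add: sum.distrib)
qed

lemma B_row2: assumes "dim_vec y = n - 1" "n \<ge> 4" "2 \<le> i" "i < n - 1"
  shows "(B_mat n *\<^sub>v y) $ i = y$(i-1) + (if i+1 < n - 1 then y$(i+1) else 0)"
proof -
  have "(B_mat n *\<^sub>v y) $ i = (\<Sum>k=0..<n-1. (if k = i-1 then y$k else 0) + (if k = i+1 then y$k else 0))"
    apply (subst B_mult) apply (use assms in simp) apply (use assms in arith)
    apply (rule sum.cong, rule refl) using assms by auto
  then show ?thesis using assms by (simp add: sum.distrib)
qed

lemma step:
  assumes "n \<ge> 4" "dim_vec x = n" "x$0 = x$1"
  shows "(D_adj n *\<^sub>v x)$0 = (D_adj n *\<^sub>v x)$1"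
    and "vec (n-1) (\<lambda>i. (D_adj n *\<^sub>v x)$(Suc i)) = B_mat n *\<^sub>v vec (n-1) (\<lambda>i. x$(Suc i))"
proof -
  show "(D_adj n *\<^sub>v x)$0 = (D_adj n *\<^sub>v x)$1"
    using D_row01[OF assms(2) _ assms(1), of 0] D_row01[OF assms(2) _ assms(1), of 1] by simp
  define y where "y = vec (n-1) (\<lambda>i. x$(Suc i))"
  have dy: "dim_vec y = n - 1" unfolding y_def by simp
  show "vec (n-1) (\<lambda>i. (D_adj n *\<^sub>v x)$(Suc i)) = B_mat n *\<^sub>v vec (n-1) (\<lambda>i. x$(Suc i))"
    unfolding y_def[symmetric]
  proof (rule eq_vecI)
    fix i assume "i < dim_vec (B_mat n *\<^sub>v y)"
    then have i: "i < n - 1" by simp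
    show "vec (n - 1) (\<lambda>i. (D_adj n *\<^sub>v x) $ Suc i) $ i = (B_mat n *\<^sub>v y) $ i"
    proof -
      consider "i = 0" | "i = 1" | "i \<ge> 2" by linarith
      then show ?thesis
      proof cases
        case 1
        then show ?thesis using i D_row01[OF assms(2) _ assms(1), of 1] B_row0[OF dy assms(1)] assms(1)
          by (simp add: y_def numeral_2_eq_2 numeral_3_eq_3)
      next
        case 2
        then show ?thesis using i D_row2[OF assms(2) assms(1)] B_row1[OF dy assms(1)] assms(3) assms(1)
          by (simp add: y_def numeral_2_eq_2 numeral_3_eq_3)
      next
        case 3
        then show ?thesis using i D_row3[OF assms(2) assms(1), of "Suc i"] B_row2[OF dy assms(1) 3 i] assms(1)
          by (auto simp add: y_def)
      qed
    qed
  qed (simp add: dy)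
qed

lemma powD0: "dim_vec x = n \<Longrightarrow> D_adj n ^\<^sub>m 0 *\<^sub>v x = x"
  apply (simp only: pow_mat.simps(1) D_dim)
  apply (rule one_mult_mat_vec)
  by (rule carrier_vecI)

lemma powB0: "B_mat n ^\<^sub>m 0 *\<^sub>v vec (n-1) f = vec (n-1) f"
  apply (simp only: pow_mat.simps(1) B_dim)
  apply (rule one_mult_mat_vec)
  by (rule carrier_vecI) simp

lemma powDS: "dim_vec x = n \<Longrightarrow> D_adj n ^\<^sub>m Suc j *\<^sub>v x = D_adj n ^\<^sub>m j *\<^sub>v (D_adj n *\<^sub>v x)"
  apply (simp only: pow_mat.simps(2))
  apply (rule assoc_mult_mat_vec[of _ n n _ n])
  by (auto intro!: carrier_matI carrier_vecI)

lemma powBS: "dim_vec v = n - 1 \<Longrightarrow> B_mat n ^\<^sub>m Suc j *\<^sub>v v = B_mat n ^\<^sub>m j *\<^sub>v (B_mat n *\<^sub>v v)"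
  apply (simp only: pow_mat.simps(2))
  apply (rule assoc_mult_mat_vec[of _ "n-1" "n-1" _ "n-1"])
  by (auto intro!: carrier_matI carrier_vecI)

lemma pow_step:
  assumes "n \<ge> 4" "dim_vec x = n" "x$0 = x$1"
  shows "(D_adj n ^\<^sub>m j *\<^sub>v x)$0 = (D_adj n ^\<^sub>m j *\<^sub>v x)$1 \<and>
    vec (n-1) (\<lambda>i. (D_adj n ^\<^sub>m j *\<^sub>v x)$(Suc i)) = B_mat n ^\<^sub>m j *\<^sub>v vec (n-1) (\<lambda>i. x$(Suc i))"
  using assms(2,3)
proof (induction j arbitrary: x)
  case 0
  then show ?case by (simp only: powD0 powB0)
next
  case (Suc j)
  have s1: "(D_adj n *\<^sub>v x)$0 = (D_adj n *\<^sub>v x)$1" using step(1)[OF assms(1) Suc.prems] .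
  have s2: "vec (n-1) (\<lambda>i. (D_adj n *\<^sub>v x)$(Suc i)) = B_mat n *\<^sub>v vec (n-1) (\<lambda>i. x$(Suc i))"
    using step(2)[OF assms(1) Suc.prems] .
  have d: "dim_vec (D_adj n *\<^sub>v x) = n" by simp
  note IH = Suc.IH[OF d s1]
  show ?case
    apply (simp only: powDS[OF Suc.prems(1)] powBS[of "vec (n-1) (\<lambda>i. x$(Suc i))", OF dim_vec])
    using IH s2 by metis
qed

theorem lemma2p1:
  fixes n :: nat
  assumes "n \<ge> 4"
  shows "hat_W (walk_matrix (D_adj n)) = walk_matrix (B_mat n)"
proof (rule eq_matI)
  show "dim_row (hat_W (walk_matrix (D_adj n))) = dim_row (walk_matrix (B_mat n))"
    by (simp add: hat_W_def walk_matrix_def Let_def)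
  show "dim_col (hat_W (walk_matrix (D_adj n))) = dim_col (walk_matrix (B_mat n))"
    by (simp add: hat_W_def walk_matrix_def Let_def)
  fix i j assume "i < dim_row (walk_matrix (B_mat n))" "j < dim_col (walk_matrix (B_mat n))"
  then have ij: "i < n - 1" "j < n - 1" by (simp_all add: walk_matrix_def Let_def)
  have d1: "dim_vec (ones_vec n) = n" by (simp add: ones_vec_def)
  have d2: "ones_vec n $ 0 = ones_vec n $ 1" using assms by (simp add: ones_vec_def)
  note P = conjunct2[OF pow_step[OF assms d1 d2, of j]]
  have o: "vec (n-1) (\<lambda>i. ones_vec n $ Suc i) = ones_vec (n-1)"
    unfolding ones_vec_def by (auto intro!: eq_vecI)
  have "(D_adj n ^\<^sub>m j *\<^sub>v ones_vec n) $ Suc i = (B_mat n ^\<^sub>m j *\<^sub>v ones_vec (n-1)) $ i"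
  proof -
    have "(D_adj n ^\<^sub>m j *\<^sub>v ones_vec n) $ Suc i = vec (n-1) (\<lambda>i. (D_adj n ^\<^sub>m j *\<^sub>v ones_vec n)$(Suc i)) $ i"
      using ij by simp
    also have "\<dots> = (B_mat n ^\<^sub>m j *\<^sub>v ones_vec (n-1)) $ i"
      using P o by simp
    finally show ?thesis .
  qed
  then show "hat_W (walk_matrix (D_adj n)) $$ (i, j) = walk_matrix (B_mat n) $$ (i, j)"
    using ij by (simp add: hat_W_def walk_matrix_def Let_def)
qed

end
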